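(* Let $\mathcal C$ be the UM simplex $(n,k)$ code and consider the nodes of $c_{\rm total}=u_{\rm total}G_{\rm total}$. Then: (1) any erasure pattern with at most $2^{k-1}$ erasures allows for parallel $2$-repair; (2) any erasure pattern with at most $2^k-1$ erasures allows for parallel $3$-repair; (3) any erasure pattern with at most $2^k$ erasures allows for parallel $4$-repair; (4) any erasure pattern with at most $2^k+2^{k-1}-1=d_{free}-1$ erasures allows for parallel $5$-repair.
   Context: Let $k\ge2$ and let $G\in\mathbb F_2^{k\times(2^k-1)}$ be a generator matrix of the binary simplex code (columns are all distinct nonzero vectors of $\mathbb F_2^k$); set $n=2(2^k-1)$. The UM simplex $(n,k)$ code is the binary convolutional code with encoder $G(D)=G_0+G_1D$, $G_0=[G\ G]$, $G_1=[G\ 0]\in\mathbb F_2^{k\times n}$; its free distance is $3\cdot2^{k-1}$. For $u_{\rm total}=(u_0,\dots,u_s)\in\mathbb F_2^{(s+1)k}$, $c_{\rm total}=(c_0,\dots,c_{s+1})=u_{\rm total}G_{\rm total}$, where $G_{\rm total}\in\mathbb F_2^{(s+1)k\times(s+2)n}$ is the block matrix whose $i$-th block row ($i=0,\dots,s$) has $G_0$ in block column $i$, $G_1$ in block column $i+1$ and zeros elsewhere. Nodes are the coordinates of $c_{\rm total}$, corresponding to the columns $g_1,\dots,g_N$ of $G_{\rm total}$. An erasure pattern is a set of erased nodes; the others are live. A node $c_i$ is related to distinct nodes $c_{j_1},\dots,c_{j_\gamma}$ (all different from $c_i$) if $g_i=g_{j_1}+\dots+g_{j_\gamma}$. An erased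 node allows for $r$-repair if it is related to $\gamma\le r$ live nodes. An erasure pattern allows for parallel $r$-repair if each erased node allows for $r$-repair with respect to the original set of live nodes. *)

theory Defs
  imports Main
begin

text \<open>Binary vectors over F_2 are modelled as functions nat => bool (coordinate index to bit).\<close>

definition simplex_gen :: "nat \<Rightarrow> (nat \<Rightarrow> nat \<Rightarrow> bool) \<Rightarrow> bool" where
  "simplex_gen k G \<longleftrightarrow>
     bij_betw G {..<2^k - 1} {v. (\<forall>i. k \<le> i \<longrightarrow> \<not> v i) \<and> (\<exists>i. v i)}"

text \<open>Column t of G_total (t < (s+2)n, n = 2(2^k-1)), as a vector indexed by the
  row index a*k + r (block row a \<le> s, r < k). G0 = [G G], G1 = [G 0].\<close>

definition gtot :: "nat \<Rightarrow> nat \<Rightarrow> (nat \<Rightarrow> nat \<Rightarrow> bool) \<Rightarrow> nat \<Rightarrow> nat \<Rightarrow> bool" where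
  "gtot k s G t row =
     (let m = 2^k - 1; n = 2 * m; b = t div n; c = t mod n; a = row div k; r = row mod k
      in row < (s + 1) * k \<and>
         ((b = a \<and> G (c mod m) r) \<or> (b = a + 1 \<and> c < m \<and> G c r)))"

definition num_nodes :: "nat \<Rightarrow> nat \<Rightarrow> nat" where
  "num_nodes k s = (s + 2) * (2 * (2^k - 1))"

definition related :: "nat \<Rightarrow> nat \<Rightarrow> (nat \<Rightarrow> nat \<Rightarrow> bool) \<Rightarrow> nat \<Rightarrow> nat set \<Rightarrow> bool" where
  "related k s G i J \<longleftrightarrow>
     J \<noteq> {} \<and> J \<subseteq> {..<num_nodes k s} \<and> i \<notin> J \<and>
     (\<forall>row. gtot k s G i row = odd (card {j \<in> J. gtot k s G j row}))"

definition allows_repair :: "nat \<Rightarrow> nat \<Rightarrow> (nat \<Rightarrow> nat \<Rightarrow> bool) \<Rightarrow> nat set \<Rightarrow> nat \<Rightarrow> nat \<Rightarrow> bool" where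
  "allows_repair k s G E r i \<longleftrightarrow>
     (\<exists>J. J \<subseteq> {..<num_nodes k s} - E \<and> card J \<le> r \<and> related k s G i J)"

definition parallel_repair :: "nat \<Rightarrow> nat \<Rightarrow> (nat \<Rightarrow> nat \<Rightarrow> bool) \<Rightarrow> nat set \<Rightarrow> nat \<Rightarrow> bool" where
  "parallel_repair k s G E r \<longleftrightarrow> (\<forall>i \<in> E. allows_repair k s G E r i)"

end

theory Submission
  imports Defs
begin

lemma pigeon:
  assumes "finite I" "finite E" "i \<in> E" "card E \<le> card I"
    "\<forall>p\<in>I. i \<notin> F p" "\<forall>p\<in>I. \<forall>q\<in>I. p \<noteq> q \<longrightarrow> F p \<inter> F q = {}"
  shows "\<exists>p\<in>I. F p \<inter> E = {}"
proof (rule ccontr)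
  assume "\<not> ?thesis"
  then have "\<forall>p\<in>I. F p \<inter> E \<noteq> {}" by simp
  then have "\<forall>p\<in>I. (SOME x. x \<in> F p \<inter> E) \<in> F p \<inter> E" by (simp only: some_in_eq)
  then obtain f where f: "\<forall>p\<in>I. f p \<in> F p \<inter> E" by (rule that)
  have inj: "inj_on f I"
  proof (rule inj_onI)
    fix p q assume "p \<in> I" "q \<in> I" "f p = f q"
    note pq = this
    show "p = q"
    proof (rule ccontr)
      assume "p \<noteq> q"
      then have "F p \<inter> F q = {}" using assms(6) pq(1,2) by simp
      moreover have "f p \<in> F p" "f q \<in> F q" using f pq(1,2) by simp_all
      ultimately show False using pq(3) by (metis IntI empty_iff)
    qed
  qed
  have "f ` I \<subseteq> E - {i}" using f assms(5) by blast
  then have "card (f ` I) \<le> card (E - {i})" using assms(2) by (intro card_mono) auto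
  also have "\<dots> = card E - 1" using assms(2,3) by simp
  finally have "card I \<le> card E - 1" using card_image[OF inj] by simp
  moreover have "card E > 0" using assms(2,3) card_gt_0_iff by blast
  ultimately show False using assms(4) by linarith
qed

locale um =
  fixes k s :: nat and G :: "nat \<Rightarrow> nat \<Rightarrow> bool"
  assumes k2: "2 \<le> k" and sg: "simplex_gen k G"
begin

definition m :: nat where "m = 2^k - 1"
abbreviation N where "N \<equiv> num_nodes k s"
abbreviation col where "col \<equiv> gtot k s G"

definition An :: "nat \<Rightarrow> nat \<Rightarrow> nat" where "An b x = b * (2*m) + x"
definition Bn :: "nat \<Rightarrow> nat \<Rightarrow> nat" where "Bn b x = b * (2*m) + (m + x)"
definition sm :: "nat set \<Rightarrow> nat \<Rightarrow> bool" where "sm S row = odd (card {j\<in>S. col j row})"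
definition pl :: "nat \<Rightarrow> nat \<Rightarrow> nat" where "pl c w = inv_into {..<m} G (\<lambda>r. G c r \<noteq> G w r)"
definition T :: "nat \<Rightarrow> nat set" where "T c = {w. w < m \<and> w \<noteq> c \<and> w < pl c w}"

lemma m3: "m \<ge> 3"
proof -
  have "(2::nat)^2 \<le> 2^k" using k2 by (intro power_increasing) auto
  then show ?thesis by (simp add: m_def)
qed

lemma N_eq: "N = (s+2)*(2*m)" by (simp add: num_nodes_def m_def)

lemma dm: "x < 2*m \<Longrightarrow> (b*(2*m) + x) div (2*m) = b \<and> (b*(2*m)+x) mod (2*m) = x"
  by simp

lemma An_dm: "x < m \<Longrightarrow> An b x div (2*m) = b \<and> An b x mod (2*m) = x"
proof -
  assume a: "x < m"
  have "x < 2*m" using a by linarith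
  then show ?thesis unfolding An_def by (rule dm)
qed

lemma Bn_dm: "x < m \<Longrightarrow> Bn b x div (2*m) = b \<and> Bn b x mod (2*m) = m + x"
proof -
  assume a: "x < m"
  have "m + x < 2*m" using a by linarith
  then show ?thesis unfolding Bn_def by (rule dm)
qed

lemma An_inj[simp]: "x < m \<Longrightarrow> x' < m \<Longrightarrow> An b x = An b' x' \<longleftrightarrow> b = b' \<and> x = x'"
proof -
  assume a: "x < m" "x' < m"
  note d1 = An_dm[OF a(1), of b] and d2 = An_dm[OF a(2), of b']
  show ?thesis
  proof
    assume e: "An b x = An b' x'"
    have "An b x div (2*m) = An b' x' div (2*m)" "An b x mod (2*m) = An b' x' mod (2*m)" using e by simp_all
    then show "b = b' \<and> x = x'" using d1 d2 by linarith
  qed simp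
qed

lemma Bn_inj[simp]: "x < m \<Longrightarrow> x' < m \<Longrightarrow> Bn b x = Bn b' x' \<longleftrightarrow> b = b' \<and> x = x'"
proof -
  assume a: "x < m" "x' < m"
  note d1 = Bn_dm[OF a(1), of b] and d2 = Bn_dm[OF a(2), of b']
  show ?thesis
  proof
    assume e: "Bn b x = Bn b' x'"
    have "Bn b x div (2*m) = Bn b' x' div (2*m)" "Bn b x mod (2*m) = Bn b' x' mod (2*m)" using e by simp_all
    then show "b = b' \<and> x = x'" using d1 d2 by linarith
  qed simp
qed

lemma AB_ne[simp]: "x < m \<Longrightarrow> x' < m \<Longrightarrow> An b x \<noteq> Bn b' x'" "x < m \<Longrightarrow> x' < m \<Longrightarrow> Bn b' x' \<noteq> An b x"
proof -
  assume a: "x < m" "x' < m"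
  have h: "An b x mod (2*m) = x" "Bn b' x' mod (2*m) = m + x'" using An_dm[OF a(1)] Bn_dm[OF a(2)] by blast+
  have "x \<noteq> m + x'" using a by linarith
  then show "An b x \<noteq> Bn b' x'" "Bn b' x' \<noteq> An b x" using h by auto
qed

lemma An_lt: "b \<le> s+1 \<Longrightarrow> x < m \<Longrightarrow> An b x < N"
proof -
  assume a: "b \<le> s+1" "x < m"
  have "An b x < (b+1)*(2*m)" using a unfolding An_def by simp
  also have "\<dots> \<le> (s+2)*(2*m)" using a by (intro mult_le_mono1) auto
  finally show ?thesis using N_eq by simp
qed

lemma Bn_lt: "b \<le> s+1 \<Longrightarrow> x < m \<Longrightarrow> Bn b x < N"
proof -
  assume a: "b \<le> s+1" "x < m"
  have "Bn b x < (b+1)*(2*m)" using a unfolding Bn_def by simp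
  also have "\<dots> \<le> (s+2)*(2*m)" using a by (intro mult_le_mono1) auto
  finally show ?thesis using N_eq by simp
qed

lemma col_gen: "col t row = (row < (s+1)*k \<and> ((t div (2*m) = row div k \<and> G (t mod (2*m) mod m) (row mod k)) \<or> (t div (2*m) = row div k + 1 \<and> t mod (2*m) < m \<and> G (t mod (2*m)) (row mod k))))"
  unfolding gtot_def Let_def m_def by (rule refl)

lemma colA: "x < m \<Longrightarrow> col (An b x) row = (row < (s+1)*k \<and> (b = row div k \<or> b = row div k + 1) \<and> G x (row mod k))"
proof -
  assume a: "x < m"
  have h1: "An b x div (2*m) = b" "An b x mod (2*m) = x" using An_dm[OF a] by blast+
  have h3: "x mod m = x" using a by simp
  show ?thesis unfolding col_gen h1 h3 using a by blast
qed

lemma colB: "x < m \<Longrightarrow> col (Bn b x) row = (row < (s+1)*k \<and> b = row div k \<and> G x (row mod k))"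
proof -
  assume a: "x < m"
  have h1: "Bn b x div (2*m) = b" "Bn b x mod (2*m) = m + x" using Bn_dm[OF a] by blast+
  have h3: "(m + x) mod m = x" using a by simp
  have "\<not> m + x < m" by simp
  then show ?thesis unfolding col_gen h1 h3 by blast
qed

lemma node_cases:
  assumes "i < N"
  shows "\<exists>b c. c < m \<and> b \<le> s+1 \<and> (i = An b c \<or> i = Bn b c)"
proof -
  define b where "b = i div (2*m)"
  define r where "r = i mod (2*m)"
  have i: "i = b*(2*m) + r" unfolding b_def r_def by (metis div_mult_mod_eq)
  have "b < s+2" using assms N_eq unfolding b_def by (simp add: less_mult_imp_div_less)
  moreover have "r < 2*m" unfolding r_def using m3 by simp
  ultimately show ?thesis
  proof (cases "r < m")
    case True then show ?thesis using i \<open>b < s+2\<close> unfolding An_def by (intro exI[of _ b] exI[of _ r]) auto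
  next
    case False
    then have "i = Bn b (r - m)" "r - m < m" using i \<open>r < 2*m\<close> unfolding Bn_def by auto
    moreover have "b \<le> s+1" using \<open>b < s+2\<close> by simp
    ultimately show ?thesis by blast
  qed
qed

end

context um begin

lemma sm_empty: "sm {} row = False" by (simp add: sm_def)

lemma sm_insert: "finite S \<Longrightarrow> x \<notin> S \<Longrightarrow> sm (insert x S) row = (col x row \<noteq> sm S row)"
proof -
  assume a: "finite S" "x \<notin> S"
  have e: "{j\<in>insert x S. col j row} = (if col x row then insert x {j\<in>S. col j row} else {j\<in>S. col j row})" by auto
  have "finite {j\<in>S. col j row}" "x \<notin> {j\<in>S. col j row}" using a by auto
  then show ?thesis unfolding sm_def e by (simp add: card_insert_if)
qed

lemma sm_single: "sm {x} row = col x row"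
  using sm_insert[of "{}" x row] by (simp add: sm_empty)

lemma sm_two: "x \<noteq> y \<Longrightarrow> sm {x,y} row = (col x row \<noteq> col y row)"
  using sm_insert[of "{y}" x row] by (simp add: sm_single)

lemma sm_union: "finite S \<Longrightarrow> finite S' \<Longrightarrow> S \<inter> S' = {} \<Longrightarrow> sm (S \<union> S') row = (sm S row \<noteq> sm S' row)"
proof -
  assume a: "finite S" "finite S'" "S \<inter> S' = {}"
  have e: "{j\<in>S \<union> S'. col j row} = {j\<in>S. col j row} \<union> {j\<in>S'. col j row}" by auto
  have d: "{j\<in>S. col j row} \<inter> {j\<in>S'. col j row} = {}" using a(3) by auto
  have "card {j\<in>S \<union> S'. col j row} = card {j\<in>S. col j row} + card {j\<in>S'. col j row}"
    unfolding e using a(1,2) d by (intro card_Un_disjoint) auto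
  then show ?thesis unfolding sm_def by simp
qed

definition V :: "(nat \<Rightarrow> bool) set" where "V = {v. (\<forall>i. k \<le> i \<longrightarrow> \<not> v i) \<and> (\<exists>i. v i)}"

lemma G_bij: "bij_betw G {..<m} V"
  using sg unfolding simplex_gen_def V_def m_def .

lemma G_inj: "inj_on G {..<m}" using G_bij by (rule bij_betw_imp_inj_on)
lemma G_img: "G ` {..<m} = V" using G_bij by (rule bij_betw_imp_surj_on)

lemma GV: "w < m \<Longrightarrow> G w \<in> V"
proof -
  assume "w < m"
  then have "G w \<in> G ` {..<m}" by simp
  then show ?thesis unfolding G_img .
qed

lemma pl_props:
  assumes c: "c < m" and w: "w < m" and cw: "w \<noteq> c"
  shows "pl c w < m" "G (pl c w) = (\<lambda>r. G c r \<noteq> G w r)" "pl c w \<noteq> c" "pl c w \<noteq> w"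
proof -
  define x where "x = (\<lambda>r. G c r \<noteq> G w r)"
  have "G c \<noteq> G w" using G_inj c w cw by (metis inj_onD lessThan_iff)
  then obtain r0 where r0: "G c r0 \<noteq> G w r0" unfolding fun_eq_iff by blast
  have "x \<in> V" using GV[OF c] GV[OF w] r0 unfolding V_def x_def by auto
  then have xi: "x \<in> G ` {..<m}" using G_img by simp
  show p1: "pl c w < m" using inv_into_into[OF xi] unfolding pl_def x_def by simp
  show p2: "G (pl c w) = (\<lambda>r. G c r \<noteq> G w r)" using f_inv_into_f[OF xi] unfolding pl_def x_def by simp
  show "pl c w \<noteq> c"
  proof
    assume "pl c w = c"
    then have "\<forall>r. G c r = (G c r \<noteq> G w r)" using p2 by metis
    then have "\<forall>r. \<not> G w r" by blast
    then show False using GV[OF w] unfolding V_def by blast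
  qed
  show "pl c w \<noteq> w"
  proof
    assume "pl c w = w"
    then have "\<forall>r. G w r = (G c r \<noteq> G w r)" using p2 by metis
    then have "\<forall>r. \<not> G c r" by blast
    then show False using GV[OF c] unfolding V_def by blast
  qed
qed

lemma pl_pl:
  assumes c: "c < m" and w: "w < m" and cw: "w \<noteq> c"
  shows "pl c (pl c w) = w"
proof -
  have "(\<lambda>r. G c r \<noteq> G (pl c w) r) = G w" using pl_props(2)[OF c w cw] by auto
  then show ?thesis unfolding pl_def using G_inj w by (simp add: inv_into_f_f)
qed

lemma T_sub: "w \<in> T c \<Longrightarrow> w < m \<and> w \<noteq> c \<and> w < pl c w" unfolding T_def by simp

lemma T_pl_notin: "c < m \<Longrightarrow> w \<in> T c \<Longrightarrow> pl c w \<notin> T c"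
proof
  assume c: "c < m" and w: "w \<in> T c" and u: "pl c w \<in> T c"
  have "w < pl c w" using T_sub[OF w] by simp
  moreover have "pl c w < pl c (pl c w)" using T_sub[OF u] by simp
  moreover have "pl c (pl c w) = w" using pl_pl c T_sub[OF w] by blast
  ultimately show False by simp
qed

lemma T_card: assumes c: "c < m" shows "2 * card (T c) = m - 1"
proof -
  have fin: "finite (T c)" unfolding T_def by simp
  have A: "{..<m} - {c} = T c \<union> pl c ` T c"
  proof (intro equalityI subsetI)
    fix w assume "w \<in> {..<m} - {c}"
    then have w: "w < m" "w \<noteq> c" by auto
    show "w \<in> T c \<union> pl c ` T c"
    proof (cases "w < pl c w")
      case True then show ?thesis using w unfolding T_def by simp
    next
      case False
      have "pl c w \<noteq> w" using pl_props(4)[OF c w] .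
      then have lt: "pl c w < w" using False by simp
      have "pl c w \<in> T c" unfolding T_def using pl_props(1,3)[OF c w] lt pl_pl[OF c w] by simp
      moreover have "w = pl c (pl c w)" using pl_pl[OF c w] by simp
      ultimately have "w \<in> pl c ` T c" by (rule rev_image_eqI)
      then show ?thesis by (rule UnI2)
    qed
  next
    fix w assume "w \<in> T c \<union> pl c ` T c"
    then show "w \<in> {..<m} - {c}"
    proof
      assume "w \<in> T c" then show ?thesis using T_sub by simp
    next
      assume "w \<in> pl c ` T c"
      then obtain u where u: "u \<in> T c" "w = pl c u" by (rule imageE) simp
      then show ?thesis using pl_props(1,3)[OF c] T_sub[OF u(1)] by simp
    qed
  qed
  have D: "T c \<inter> pl c ` T c = {}"
  proof (rule ccontr)
    assume "T c \<inter> pl c ` T c \<noteq> {}"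
    then obtain w where "w \<in> T c \<inter> pl c ` T c" by (metis ex_in_conv)
    then have "w \<in> T c" "w \<in> pl c ` T c" by simp_all
    from this(2) obtain u where "u \<in> T c" "w = pl c u" by (rule imageE) simp
    then show False using T_pl_notin[OF c] \<open>w \<in> T c\<close> by simp
  qed
  have I: "inj_on (pl c) (T c)"
  proof (rule inj_onI)
    fix u v assume "u \<in> T c" "v \<in> T c" "pl c u = pl c v"
    note uv = this
    have "u = pl c (pl c u)" using pl_pl[OF c] T_sub[OF uv(1)] by simp
    also have "\<dots> = pl c (pl c v)" using uv(3) by simp
    also have "\<dots> = v" using pl_pl[OF c] T_sub[OF uv(2)] by simp
    finally show "u = v" .
  qed
  have c1: "card ({..<m} - {c}) = m - 1" using c by simp
  have cu: "card (T c \<union> pl c ` T c) = card (T c) + card (pl c ` T c)" using fin D by (intro card_Un_disjoint) auto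
  have "m - 1 = card (T c) + card (T c)" using c1 cu A card_image[OF I] by simp
  then show ?thesis by simp
qed

end


lemma dis_notin: "A \<inter> B = {} \<Longrightarrow> x \<in> B \<Longrightarrow> x \<notin> A" by auto
lemma dis4: "A \<inter> C = {} \<Longrightarrow> A \<inter> D = {} \<Longrightarrow> B \<inter> C = {} \<Longrightarrow> B \<inter> D = {} \<Longrightarrow> (A \<union> B) \<inter> (C \<union> D) = {}" by auto
lemma dis2a: "A \<inter> C = {} \<Longrightarrow> A \<inter> D = {} \<Longrightarrow> A \<inter> (C \<union> D) = {}" by auto
lemma dis2b: "A \<inter> C = {} \<Longrightarrow> B \<inter> C = {} \<Longrightarrow> (A \<union> B) \<inter> C = {}" by auto

context um begin

definition sz :: "nat \<Rightarrow> nat" where "sz j = (if j = 0 then 1 else if j = 1 then 2 else 4)"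

definition copysys :: "nat \<Rightarrow> nat \<Rightarrow> (nat \<Rightarrow> nat \<Rightarrow> nat set) \<Rightarrow> (nat \<Rightarrow> nat \<Rightarrow> bool) \<Rightarrow> bool" where
  "copysys i c C \<psi> \<longleftrightarrow> c < m \<and> C 0 c = {i} \<and>
     (\<forall>j<3. \<forall>w<m. finite (C j w) \<and> C j w \<noteq> {} \<and> C j w \<subseteq> {..<N} \<and> card (C j w) \<le> sz j \<and> (\<forall>row. sm (C j w) row = \<psi> w row)) \<and>
     (\<forall>j<3. \<forall>j'<3. \<forall>w<m. \<forall>w'<m. (j \<noteq> j' \<or> w \<noteq> w') \<longrightarrow> C j w \<inter> C j' w' = {}) \<and>
     (\<forall>w<m. w \<noteq> c \<longrightarrow> (\<forall>row. \<psi> c row = (\<psi> w row \<noteq> \<psi> (pl c w) row)))"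

lemma family:
  assumes cs: "copysys i c C \<psi>" and E: "E \<subseteq> {..<N}" "i \<in> E"
    and dP: "distinct (map fst P)" "distinct (map snd P)"
    and Pok: "\<forall>p\<in>set P. fst p < 3 \<and> snd p < 3 \<and> sz (fst p) + sz (snd p) \<le> r"
    and dX: "distinct X" and Xok: "\<forall>x\<in>set X. 0 < x \<and> x < 3 \<and> sz x \<le> r"
    and cE: "card E \<le> length P * card (T c) + length X"
  shows "allows_repair k s G E r i"
proof -
  have c: "c < m" using cs unfolding copysys_def by blast
  have C0: "C 0 c = {i}" using cs unfolding copysys_def by blast
  have P1: "\<And>j w. j < 3 \<Longrightarrow> w < m \<Longrightarrow> finite (C j w) \<and> C j w \<noteq> {} \<and> C j w \<subseteq> {..<N} \<and> card (C j w) \<le> sz j \<and> (\<forall>row. sm (C j w) row = \<psi> w row)"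
    using cs unfolding copysys_def by blast
  have P1f: "finite (C j w)" if "j < 3" "w < m" for j w using P1[OF that] by (elim conjE)
  have P1n: "C j w \<noteq> {}" if "j < 3" "w < m" for j w using P1[OF that] by (elim conjE)
  have P1s: "C j w \<subseteq> {..<N}" if "j < 3" "w < m" for j w using P1[OF that] by (elim conjE)
  have P1c: "card (C j w) \<le> sz j" if "j < 3" "w < m" for j w using P1[OF that] by (elim conjE)
  have P1m: "sm (C j w) row = \<psi> w row" if "j < 3" "w < m" for j w row using P1[OF that] by (elim conjE) (erule allE)
  have P2: "\<And>j j' w w'. j < 3 \<Longrightarrow> j' < 3 \<Longrightarrow> w < m \<Longrightarrow> w' < m \<Longrightarrow> j \<noteq> j' \<or> w \<noteq> w' \<Longrightarrow> C j w \<inter> C j' w' = {}"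
    using cs unfolding copysys_def by blast
  have P3: "\<And>w row. w < m \<Longrightarrow> w \<noteq> c \<Longrightarrow> \<psi> c row = (\<psi> w row \<noteq> \<psi> (pl c w) row)"
    using cs unfolding copysys_def by blast
  have colI: "\<And>row. col i row = \<psi> c row"
  proof -
    fix row
    have "col i row = sm (C 0 c) row" unfolding C0 sm_single ..
    also have "\<dots> = \<psi> c row" using P1[of 0 c] c by simp
    finally show "col i row = \<psi> c row" .
  qed
  have Tf: "\<And>w. w \<in> T c \<Longrightarrow> w < m \<and> w \<noteq> c \<and> pl c w < m \<and> pl c w \<noteq> c \<and> pl c w \<noteq> w"
    using T_sub pl_props[OF c] by metis
  have mT: "m \<notin> T c" using T_sub by blast
  define I where "I = (T c \<times> {..<length P}) \<union> ({m} \<times> {..<length X})"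
  define F where "F = (\<lambda>(w,j). if w = m then C (X!j) c else C (fst (P!j)) w \<union> C (snd (P!j)) (pl c w))"
  have finT: "finite (T c)" unfolding T_def by simp
  have finI: "finite I" unfolding I_def using finT by simp
  have dI: "(T c \<times> {..<length P}) \<inter> ({m} \<times> {..<length X}) = {}" using mT by auto
  have cardI: "card I = length P * card (T c) + length X"
    unfolding I_def using card_Un_disjoint[OF _ _ dI] finT by (simp add: card_cartesian_product)
  have Fprops: "finite (F p) \<and> F p \<noteq> {} \<and> F p \<subseteq> {..<N} \<and> i \<notin> F p \<and> card (F p) \<le> r \<and> (\<forall>row. col i row = sm (F p) row)"
    if pI: "p \<in> I" for p
  proof -
    obtain w j where p: "p = (w, j)" by (cases p)
    show ?thesis
    proof (cases "w = m")
      case True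
      then have j: "j < length X" using pI p mT unfolding I_def by auto
      define x where "x = X!j"
      have "x \<in> set X" unfolding x_def using j by (rule nth_mem)
      then have x: "0 < x" "x < 3" "sz x \<le> r" using Xok by blast+
      have Fp: "F p = C x c" unfolding F_def p x_def using True by simp
      have pp: "finite (C x c) \<and> C x c \<noteq> {} \<and> C x c \<subseteq> {..<N} \<and> card (C x c) \<le> sz x \<and> (\<forall>row. sm (C x c) row = \<psi> c row)"
        using P1[OF x(2) c] .
      have d0: "C x c \<inter> C 0 c = {}" using P2[OF x(2) _ c c] x(1) by simp
      have ni: "i \<notin> C x c" using dis_notin[OF d0, of i] unfolding C0 by simp
      have "card (C x c) \<le> sz x" using pp by (elim conjE)
      then have cr: "card (C x c) \<le> r" using x(3) by (rule le_trans)
      have sr: "\<forall>row. col i row = sm (C x c) row"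
      proof
        fix row
        have "sm (C x c) row = \<psi> c row" using pp by (elim conjE) (erule allE)
        then show "col i row = sm (C x c) row" using colI[of row] by (rule ssubst)
      qed
      have "finite (C x c)" using pp by (elim conjE)
      moreover have "C x c \<noteq> {}" using pp by (elim conjE)
      moreover have "C x c \<subseteq> {..<N}" using pp by (elim conjE)
      ultimately
      show ?thesis unfolding Fp using ni cr sr by (intro conjI)
    next
      case False
      then have w: "w \<in> T c" and j: "j < length P" using pI p unfolding I_def by auto
      define a where "a = fst (P!j)"
      define b where "b = snd (P!j)"
      define u where "u = pl c w"
      have "P!j \<in> set P" using j by (rule nth_mem)
      then have ab: "a < 3" "b < 3" "sz a + sz b \<le> r" using Pok unfolding a_def b_def by blast+
      have wu: "w < m" "w \<noteq> c" "u < m" "u \<noteq> c" "u \<noteq> w" using Tf[OF w] unfolding u_def by auto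
      have Fp: "F p = C a w \<union> C b u" unfolding F_def p a_def b_def u_def using False by simp
      have dab: "C a w \<inter> C b u = {}" using P2[OF ab(1,2) wu(1,3)] wu(5) by simp
      have d1: "C a w \<inter> C 0 c = {}" using P2[OF ab(1) _ wu(1) c] wu(2) by simp
      have d2: "C b u \<inter> C 0 c = {}" using P2[OF ab(2) _ wu(3) c] wu(4) by simp
      have ni: "i \<notin> C a w \<union> C b u" using dis_notin[OF d1, of i] dis_notin[OF d2, of i] unfolding C0 by simp
      have cd: "card (C a w \<union> C b u) \<le> r"
      proof -
        have "card (C a w \<union> C b u) \<le> card (C a w) + card (C b u)" by (rule card_Un_le)
        moreover have "card (C a w) \<le> sz a" by (rule P1c[OF ab(1) wu(1)])
        moreover have "card (C b u) \<le> sz b" by (rule P1c[OF ab(2) wu(3)])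
        ultimately show ?thesis using ab(3) by linarith
      qed
      have smu: "col i row = sm (C a w \<union> C b u) row" for row
      proof -
        have "sm (C a w \<union> C b u) row = (sm (C a w) row \<noteq> sm (C b u) row)"
          by (rule sm_union[OF P1f[OF ab(1) wu(1)] P1f[OF ab(2) wu(3)] dab])
        also have "\<dots> = (\<psi> w row \<noteq> \<psi> u row)" unfolding P1m[OF ab(1) wu(1)] P1m[OF ab(2) wu(3)] ..
        also have "\<dots> = \<psi> c row" using P3[OF wu(1,2), of row] unfolding u_def by simp
        finally show ?thesis using colI[of row] by simp
      qed
      have "finite (C a w \<union> C b u)" using P1f[OF ab(1) wu(1)] P1f[OF ab(2) wu(3)] by simp
      moreover have "C a w \<union> C b u \<noteq> {}" using P1n[OF ab(1) wu(1)] by simp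
      moreover have "C a w \<union> C b u \<subseteq> {..<N}" using P1s[OF ab(1) wu(1)] P1s[OF ab(2) wu(3)] by simp
      ultimately show ?thesis unfolding Fp using ni cd smu by (intro conjI allI)
    qed
  qed
  have Fdisj: "F p \<inter> F q = {}" if pI: "p \<in> I" and qI: "q \<in> I" and pq: "p \<noteq> q" for p q
  proof -
    obtain w j where p: "p = (w, j)" by (cases p)
    obtain w' j' where q: "q = (w', j')" by (cases q)
    show ?thesis
    proof (cases "w = m")
      case True
      then have j: "j < length X" using pI p mT unfolding I_def by auto
      have x: "0 < X!j" "X!j < 3" using Xok j by auto
      have Fp: "F p = C (X!j) c" unfolding F_def p using True by simp
      show ?thesis
      proof (cases "w' = m")
        case True
        then have j': "j' < length X" using qI q mT unfolding I_def by auto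
        have x': "X!j' < 3" using Xok j' by auto
        have "j \<noteq> j'" using pq p q True \<open>w = m\<close> by simp
        then have "X!j \<noteq> X!j'" using nth_eq_iff_index_eq[OF dX j j'] by simp
        moreover have Fq: "F q = C (X!j') c" unfolding F_def q using True by simp
        ultimately show ?thesis using Fp P2[OF x(2) x' c c] by simp
      next
        case False
        then have w': "w' \<in> T c" and j': "j' < length P" using qI q unfolding I_def by auto
        have ab: "fst (P!j') < 3" "snd (P!j') < 3" using Pok j' by auto
        have wu: "w' < m" "w' \<noteq> c" "pl c w' < m" "pl c w' \<noteq> c" using Tf[OF w'] by auto
        have Fq: "F q = C (fst (P!j')) w' \<union> C (snd (P!j')) (pl c w')" unfolding F_def q using False by simp
        show ?thesis unfolding Fp Fq
          by (rule dis2a; rule P2) (use x ab wu c in auto)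
      qed
    next
      case False
      then have w: "w \<in> T c" and j: "j < length P" using pI p unfolding I_def by auto
      have ab: "fst (P!j) < 3" "snd (P!j) < 3" using Pok j by auto
      have wu: "w < m" "w \<noteq> c" "pl c w < m" "pl c w \<noteq> c" "pl c w \<noteq> w" using Tf[OF w] by auto
      have Fp: "F p = C (fst (P!j)) w \<union> C (snd (P!j)) (pl c w)" unfolding F_def p using False by simp
      show ?thesis
      proof (cases "w' = m")
        case True
        then have j': "j' < length X" using qI q mT unfolding I_def by auto
        have x': "X!j' < 3" using Xok j' by auto
        have Fq: "F q = C (X!j') c" unfolding F_def q using True by simp
        show ?thesis unfolding Fp Fq
          by (rule dis2b; rule P2) (use x' ab wu c in auto)
      next
        case False
        then have w': "w' \<in> T c" and j': "j' < length P" using qI q unfolding I_def by auto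
        have ab': "fst (P!j') < 3" "snd (P!j') < 3" using Pok j' by auto
        have wu': "w' < m" "w' \<noteq> c" "pl c w' < m" "pl c w' \<noteq> c" "pl c w' \<noteq> w'" using Tf[OF w'] by auto
        have Fq: "F q = C (fst (P!j')) w' \<union> C (snd (P!j')) (pl c w')" unfolding F_def q using False by simp
        show ?thesis
        proof (cases "w = w'")
          case True
          then have "j \<noteq> j'" using pq p q by simp
          note jj = this
          have e1: "(map fst P ! j = map fst P ! j') = (j = j')" using j j' by (intro nth_eq_iff_index_eq[OF dP(1)]) simp_all
          have e2: "(map snd P ! j = map snd P ! j') = (j = j')" using j j' by (intro nth_eq_iff_index_eq[OF dP(2)]) simp_all
          have ne: "fst (P!j) \<noteq> fst (P!j')" "snd (P!j) \<noteq> snd (P!j')"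
            using e1 e2 jj j j' by simp_all
          show ?thesis unfolding Fp Fq
            by (rule dis4; rule P2) (use ab ab' wu wu' ne True in auto)
        next
          case False
          have n1: "w \<noteq> pl c w'" using T_pl_notin[OF c w'] w by metis
          have n2: "pl c w \<noteq> w'" using T_pl_notin[OF c w] w' by metis
          have n3: "pl c w \<noteq> pl c w'"
          proof
            assume "pl c w = pl c w'"
            then have "pl c (pl c w) = pl c (pl c w')" by simp
            then show False using pl_pl[OF c wu(1,2)] pl_pl[OF c wu'(1,2)] False by simp
          qed
          show ?thesis unfolding Fp Fq
            by (rule dis4; rule P2) (use ab ab' wu wu' n1 n2 n3 False in auto)
        qed
      qed
    qed
  qed
  have finE: "finite E" using E(1) finite_subset by blast
  have "\<exists>p\<in>I. F p \<inter> E = {}"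
  proof (rule pigeon[OF finI finE E(2)])
    show "card E \<le> card I" using cE cardI by simp
    show "\<forall>p\<in>I. i \<notin> F p" using Fprops by blast
    show "\<forall>p\<in>I. \<forall>q\<in>I. p \<noteq> q \<longrightarrow> F p \<inter> F q = {}" using Fdisj by blast
  qed
  then obtain p where pI: "p \<in> I" and pE: "F p \<inter> E = {}" by blast
  note fp = Fprops[OF pI]
  have sub: "F p \<subseteq> {..<N} - E" using fp pE by auto
  have rel: "related k s G i (F p)"
    unfolding related_def using fp unfolding sm_def by auto
  show ?thesis unfolding allows_repair_def using sub fp rel by blast
qed

end


lemma card2: "card {x, y} \<le> 2" by (cases "x = y") simp_all

context um begin

definition Vp :: "nat \<Rightarrow> nat \<Rightarrow> nat set" where "Vp b w = {An (b+1) w, Bn (b+1) w}"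
definition Vm :: "nat \<Rightarrow> nat \<Rightarrow> nat set" where "Vm b w = (if b = 0 then {An 0 w} else {An b w, Bn (b-1) w})"

lemma rowdiv: "row < (s+1)*k \<Longrightarrow> row div k < s+1" by (rule less_mult_imp_div_less)

lemma sm_Vp: "w < m \<Longrightarrow> sm (Vp b w) row = col (Bn b w) row"
  unfolding Vp_def by (simp add: sm_two colA colB) arith

lemma sm_Vm: "w < m \<Longrightarrow> sm (Vm b w) row = col (Bn b w) row"
  unfolding Vm_def by (cases "b = 0") (simp_all add: sm_two sm_single colA colB, arith+)

lemma colA0: "w < m \<Longrightarrow> col (An 0 w) row = col (Bn 0 w) row"
  by (simp add: colA colB)

lemma colAs: "w < m \<Longrightarrow> col (An (s+1) w) row = col (Bn s w) row"
proof -
  assume w: "w < m"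
  have "row < (s+1)*k \<Longrightarrow> row div k < s+1" by (rule rowdiv)
  then show ?thesis unfolding colA[OF w] colB[OF w] by auto
qed

lemma colAsplit: "1 \<le> b \<Longrightarrow> w < m \<Longrightarrow> col (An b w) row = (col (Bn b w) row \<noteq> col (Bn (b-1) w) row)"
  by (simp add: colA colB) arith

lemma col_zero: "w < m \<Longrightarrow> col (Bn (s+1) w) row = False"
proof -
  assume w: "w < m"
  have "row < (s+1)*k \<Longrightarrow> row div k < s+1" by (rule rowdiv)
  then show ?thesis unfolding colB[OF w] by auto
qed

lemma addB: "c < m \<Longrightarrow> w < m \<Longrightarrow> w \<noteq> c \<Longrightarrow> col (Bn b c) row = (col (Bn b w) row \<noteq> col (Bn b (pl c w)) row)"
proof -
  assume a: "c < m" "w < m" "w \<noteq> c"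
  note p = pl_props[OF a]
  show ?thesis unfolding colB[OF a(1)] colB[OF a(2)] colB[OF p(1)] p(2) by auto
qed

lemma addA: "c < m \<Longrightarrow> w < m \<Longrightarrow> w \<noteq> c \<Longrightarrow> col (An b c) row = (col (An b w) row \<noteq> col (An b (pl c w)) row)"
proof -
  assume a: "c < m" "w < m" "w \<noteq> c"
  note p = pl_props[OF a]
  show ?thesis unfolding colA[OF a(1)] colA[OF a(2)] colA[OF p(1)] p(2) by auto
qed

lemma j3: "(j::nat) < 3 \<Longrightarrow> j = 0 \<or> j = 1 \<or> j = 2" by arith

lemma cs_B:
  assumes b: "b \<le> s" and c: "c < m"
  shows "copysys (Bn b c) c (\<lambda>j w. if j = 0 then {Bn b w} else if j = 1 then Vp b w else Vm b w) (\<lambda>w. col (Bn b w))"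
  unfolding copysys_def
proof (intro conjI allI impI)
  show "c < m" by (rule c)
  show "(if (0::nat) = 0 then {Bn b c} else if (0::nat) = 1 then Vp b c else Vm b c) = {Bn b c}" by simp
next
  fix j w :: nat assume j: "j < 3" and w: "w < m"
  let ?C = "if j = 0 then {Bn b w} else if j = 1 then Vp b w else Vm b w"
  from j3[OF j] have "finite ?C \<and> ?C \<noteq> {} \<and> ?C \<subseteq> {..<N} \<and> card ?C \<le> sz j \<and> (\<forall>row. sm ?C row = col (Bn b w) row)"
  proof (elim disjE)
    assume "j = 0" then show ?thesis using b w by (simp add: sz_def sm_single Bn_lt)
  next
    assume "j = 1" then show ?thesis using b w sm_Vp[OF w, of b] by (simp add: sz_def Vp_def An_lt Bn_lt card2)
  next
    assume "j = 2" then show ?thesis using b w sm_Vm[OF w, of b] by (simp add: sz_def Vm_def An_lt Bn_lt card2)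
  qed
  then show "finite ?C" "?C \<noteq> {}" "?C \<subseteq> {..<N}" "card ?C \<le> sz j" "\<And>row. sm ?C row = col (Bn b w) row" by blast+
next
  fix j j' w w' :: nat assume j: "j < 3" "j' < 3" and w: "w < m" "w' < m" and ne: "j \<noteq> j' \<or> w \<noteq> w'"
  show "(if j = 0 then {Bn b w} else if j = 1 then Vp b w else Vm b w) \<inter>
        (if j' = 0 then {Bn b w'} else if j' = 1 then Vp b w' else Vm b w') = {}"
    using j3[OF j(1)] j3[OF j(2)] ne w by (auto simp: Vp_def Vm_def)
next
  fix w row assume w: "w < m" "w \<noteq> c"
  show "col (Bn b c) row = (col (Bn b w) row \<noteq> col (Bn b (pl c w)) row)" by (rule addB[OF c w])
qed

lemma cs_A0:
  assumes c: "c < m"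
  shows "copysys (An 0 c) c (\<lambda>j w. if j = 0 then {An 0 w} else if j = 1 then {Bn 0 w} else Vp 0 w) (\<lambda>w. col (An 0 w))"
  unfolding copysys_def
proof (intro conjI allI impI)
  show "c < m" by (rule c)
  show "(if (0::nat) = 0 then {An 0 c} else if (0::nat) = 1 then {Bn 0 c} else Vp 0 c) = {An 0 c}" by simp
next
  fix j w :: nat assume j: "j < 3" and w: "w < m"
  let ?C = "if j = 0 then {An 0 w} else if j = 1 then {Bn 0 w} else Vp 0 w"
  from j3[OF j] have "finite ?C \<and> ?C \<noteq> {} \<and> ?C \<subseteq> {..<N} \<and> card ?C \<le> sz j \<and> (\<forall>row. sm ?C row = col (An 0 w) row)"
  proof (elim disjE)
    assume "j = 0" then show ?thesis using w by (simp add: sz_def sm_single An_lt)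
  next
    assume "j = 1" then show ?thesis using w by (simp add: sz_def sm_single Bn_lt colA0)
  next
    assume "j = 2" then show ?thesis using w sm_Vp[OF w, of 0] colA0[OF w] by (simp add: sz_def Vp_def An_lt Bn_lt card2)
  qed
  then show "finite ?C" "?C \<noteq> {}" "?C \<subseteq> {..<N}" "card ?C \<le> sz j" "\<And>row. sm ?C row = col (An 0 w) row" by blast+
next
  fix j j' w w' :: nat assume j: "j < 3" "j' < 3" and w: "w < m" "w' < m" and ne: "j \<noteq> j' \<or> w \<noteq> w'"
  show "(if j = 0 then {An 0 w} else if j = 1 then {Bn 0 w} else Vp 0 w) \<inter>
        (if j' = 0 then {An 0 w'} else if j' = 1 then {Bn 0 w'} else Vp 0 w') = {}"
    using j3[OF j(1)] j3[OF j(2)] ne w by (auto simp: Vp_def)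
next
  fix w row assume w: "w < m" "w \<noteq> c"
  show "col (An 0 c) row = (col (An 0 w) row \<noteq> col (An 0 (pl c w)) row)" by (rule addA[OF c w])
qed

lemma cs_As:
  assumes c: "c < m"
  shows "copysys (An (s+1) c) c (\<lambda>j w. if j = 0 then {An (s+1) w} else if j = 1 then {Bn s w} else Vm s w) (\<lambda>w. col (An (s+1) w))"
  unfolding copysys_def
proof (intro conjI allI impI)
  show "c < m" by (rule c)
  show "(if (0::nat) = 0 then {An (s+1) c} else if (0::nat) = 1 then {Bn s c} else Vm s c) = {An (s+1) c}" by simp
next
  fix j w :: nat assume j: "j < 3" and w: "w < m"
  let ?C = "if j = 0 then {An (s+1) w} else if j = 1 then {Bn s w} else Vm s w"
  from j3[OF j] have "finite ?C \<and> ?C \<noteq> {} \<and> ?C \<subseteq> {..<N} \<and> card ?C \<le> sz j \<and> (\<forall>row. sm ?C row = col (An (s+1) w) row)"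
  proof (elim disjE)
    assume "j = 0" then show ?thesis using w by (simp add: sz_def sm_single An_lt)
  next
    assume "j = 1" then show ?thesis using w colAs[OF w] by (simp add: sz_def sm_single Bn_lt)
  next
    assume j2: "j = 2"
    have sub: "Vm s w \<subseteq> {..<N}"
    proof (cases "s = 0")
      case True
      have "An 0 w < N" using An_lt[of 0 w] w by simp
      then show ?thesis unfolding Vm_def using True by simp
    next
      case False
      have "An s w < N" "Bn (s-1) w < N" using An_lt[of s w] Bn_lt[of "s-1" w] w by simp_all
      then show ?thesis unfolding Vm_def using False by simp
    qed
    have "finite (Vm s w)" "Vm s w \<noteq> {}" "card (Vm s w) \<le> 2" unfolding Vm_def by (simp_all add: card2)
    then show ?thesis using j2 sub sm_Vm[OF w, of s] colAs[OF w] by (simp add: sz_def)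
  qed
  then show "finite ?C" "?C \<noteq> {}" "?C \<subseteq> {..<N}" "card ?C \<le> sz j" "\<And>row. sm ?C row = col (An (s+1) w) row" by blast+
next
  fix j j' w w' :: nat assume j: "j < 3" "j' < 3" and w: "w < m" "w' < m" and ne: "j \<noteq> j' \<or> w \<noteq> w'"
  show "(if j = 0 then {An (s+1) w} else if j = 1 then {Bn s w} else Vm s w) \<inter>
        (if j' = 0 then {An (s+1) w'} else if j' = 1 then {Bn s w'} else Vm s w') = {}"
    using j3[OF j(1)] j3[OF j(2)] ne w by (auto simp: Vm_def)
next
  fix w row assume w: "w < m" "w \<noteq> c"
  show "col (An (s+1) c) row = (col (An (s+1) w) row \<noteq> col (An (s+1) (pl c w)) row)" by (rule addA[OF c w])
qed

lemma cs_Ab: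
  assumes b: "1 \<le> b" "b \<le> s" and c: "c < m"
  shows "copysys (An b c) c (\<lambda>j w. if j = 0 then {An b w} else if j = 1 then {Bn b w, Bn (b-1) w} else Vp b w \<union> Vm (b-1) w) (\<lambda>w. col (An b w))"
  unfolding copysys_def
proof (intro conjI allI impI)
  show "c < m" by (rule c)
  show "(if (0::nat) = 0 then {An b c} else if (0::nat) = 1 then {Bn b c, Bn (b-1) c} else Vp b c \<union> Vm (b-1) c) = {An b c}" by simp
next
  fix j w :: nat assume j: "j < 3" and w: "w < m"
  let ?C = "if j = 0 then {An b w} else if j = 1 then {Bn b w, Bn (b-1) w} else Vp b w \<union> Vm (b-1) w"
  from j3[OF j] have "finite ?C \<and> ?C \<noteq> {} \<and> ?C \<subseteq> {..<N} \<and> card ?C \<le> sz j \<and> (\<forall>row. sm ?C row = col (An b w) row)"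
  proof (elim disjE)
    assume "j = 0" then show ?thesis using w b by (simp add: sz_def sm_single An_lt)
  next
    assume j1: "j = 1"
    have ne: "Bn b w \<noteq> Bn (b-1) w" using w b by simp
    have "\<forall>row. sm {Bn b w, Bn (b-1) w} row = col (An b w) row"
      using sm_two[OF ne] colAsplit[OF b(1) w] by simp
    then show ?thesis using j1 w b by (simp add: sz_def Bn_lt card2)
  next
    assume j2: "j = 2"
    have fp: "finite (Vp b w)" "finite (Vm (b-1) w)" unfolding Vp_def Vm_def by simp_all
    have dv: "Vp b w \<inter> Vm (b-1) w = {}" using w b by (auto simp: Vp_def Vm_def)
    have cp: "card (Vp b w) \<le> 2" "card (Vm (b-1) w) \<le> 2" unfolding Vp_def Vm_def by (simp_all add: card2)
    have cu: "card (Vp b w \<union> Vm (b-1) w) \<le> 4"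
      using card_Un_le[of "Vp b w" "Vm (b-1) w"] cp by linarith
    have sub: "Vp b w \<union> Vm (b-1) w \<subseteq> {..<N}" using w b by (auto simp: Vp_def Vm_def An_lt Bn_lt)
    have ne: "Vp b w \<union> Vm (b-1) w \<noteq> {}" unfolding Vp_def by simp
    have sm2: "\<forall>row. sm (Vp b w \<union> Vm (b-1) w) row = col (An b w) row"
    proof
      fix row
      have "sm (Vp b w \<union> Vm (b-1) w) row = (sm (Vp b w) row \<noteq> sm (Vm (b-1) w) row)"
        by (rule sm_union[OF fp dv])
      also have "\<dots> = (col (Bn b w) row \<noteq> col (Bn (b-1) w) row)" unfolding sm_Vp[OF w] sm_Vm[OF w] ..
      also have "\<dots> = col (An b w) row" using colAsplit[OF b(1) w] by simp
      finally show "sm (Vp b w \<union> Vm (b-1) w) row = col (An b w) row" .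
    qed
    show ?thesis using j2 fp cu sub ne sm2 by (simp add: sz_def)
  qed
  then show "finite ?C" "?C \<noteq> {}" "?C \<subseteq> {..<N}" "card ?C \<le> sz j" "\<And>row. sm ?C row = col (An b w) row" by blast+
next
  fix j j' w w' :: nat assume j: "j < 3" "j' < 3" and w: "w < m" "w' < m" and ne: "j \<noteq> j' \<or> w \<noteq> w'"
  show "(if j = 0 then {An b w} else if j = 1 then {Bn b w, Bn (b-1) w} else Vp b w \<union> Vm (b-1) w) \<inter>
        (if j' = 0 then {An b w'} else if j' = 1 then {Bn b w', Bn (b-1) w'} else Vp b w' \<union> Vm (b-1) w') = {}"
    using j3[OF j(1)] j3[OF j(2)] ne w b by (auto simp: Vp_def Vm_def)
next
  fix w row assume w: "w < m" "w \<noteq> c"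
  show "col (An b c) row = (col (An b w) row \<noteq> col (An b (pl c w)) row)" by (rule addA[OF c w])
qed

end

context um begin

lemma powK: "(2::nat)^k = 2 * 2^(k-1)" "2 \<le> (2::nat)^(k-1)"
proof -
  obtain j where j: "k = Suc j" using k2 by (cases k) auto
  show "(2::nat)^k = 2 * 2^(k-1)" unfolding j by simp
  have "(2::nat)^1 \<le> 2^j" using k2 j by (intro power_increasing) auto
  then show "2 \<le> (2::nat)^(k-1)" unfolding j by simp
qed

lemma cardT: "c < m \<Longrightarrow> card (T c) = 2^(k-1) - 1"
proof -
  assume c: "c < m"
  have "2 * card (T c) = m - 1" by (rule T_card[OF c])
  then show ?thesis using powK unfolding m_def by linarith
qed

lemma m_pow: "m = 2 * 2^(k-1) - 1" using powK unfolding m_def by linarith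

lemma copysys_all:
  assumes cs: "copysys i c C \<psi>" and E: "E \<subseteq> {..<N}" "i \<in> E"
  shows "(card E \<le> 2^(k-1) \<longrightarrow> allows_repair k s G E 2 i) \<and>
         (card E \<le> 2^k - 1 \<longrightarrow> allows_repair k s G E 3 i) \<and>
         (card E \<le> 2^k \<longrightarrow> allows_repair k s G E 4 i) \<and>
         (card E \<le> 2^k + 2^(k-1) - 1 \<longrightarrow> allows_repair k s G E 5 i)"
proof -
  have c: "c < m" using cs unfolding copysys_def by blast
  note t = cardT[OF c] and K = powK
  show ?thesis
  proof (intro conjI impI)
    assume h: "card E \<le> 2^(k-1)"
    have "card E \<le> 1 * card (T c) + 1" using h t K by linarith
    then have cE': "card E \<le> length [(0,0)] * card (T c) + length ([1]::nat list)" by simp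
    show "allows_repair k s G E 2 i"
      by (rule family[OF cs E(1) E(2) _ _ _ _ _ cE']) (simp_all add: sz_def)
  next
    assume h: "card E \<le> 2^k - 1"
    have "card E \<le> 2 * card (T c) + 1" using h t K by linarith
    then have cE': "card E \<le> length [(0,1),(1,0)] * card (T c) + length ([1]::nat list)" by simp
    show "allows_repair k s G E 3 i"
      by (rule family[OF cs E(1) E(2) _ _ _ _ _ cE']) (simp_all add: sz_def)
  next
    assume h: "card E \<le> 2^k"
    have "card E \<le> 2 * card (T c) + 2" using h t K by linarith
    then have cE': "card E \<le> length [(0,1),(1,0)] * card (T c) + length ([1,2]::nat list)" by simp
    show "allows_repair k s G E 4 i"
      by (rule family[OF cs E(1) E(2) _ _ _ _ _ cE']) (simp_all add: sz_def)
  next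
    assume h: "card E \<le> 2^k + 2^(k-1) - 1"
    have "card E \<le> 3 * card (T c) + 2" using h t K by linarith
    then have cE': "card E \<le> length [(0,2),(2,0),(1,1)] * card (T c) + length ([1,2]::nat list)" by simp
    show "allows_repair k s G E 5 i"
      by (rule family[OF cs E(1) E(2) _ _ _ _ _ cE']) (simp_all add: sz_def)
  qed
qed

lemma zero_node:
  assumes c: "c < m" and E: "E \<subseteq> {..<N}" "Bn (s+1) c \<in> E" and cE: "card E \<le> 2*m - 1" and r: "2 \<le> r"
  shows "allows_repair k s G E r (Bn (s+1) c)"
proof -
  define i where "i = Bn (s+1) c"
  define I where "I = (({..<m} - {c}) \<times> {0::nat}) \<union> ({..<m} \<times> {1})"
  define F where "F = (\<lambda>(w::nat, j::nat). if j = 0 then {Bn (s+1) w} else {An 0 w, Bn 0 w})"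
  have finI: "finite I" unfolding I_def by simp
  have dI: "(({..<m} - {c}) \<times> {0::nat}) \<inter> ({..<m} \<times> {1}) = {}" by auto
  have cardI: "card I = (m - 1) + m"
    unfolding I_def using card_Un_disjoint[OF _ _ dI] c by (simp add: card_cartesian_product)
  have coli: "col i row = False" for row unfolding i_def by (rule col_zero[OF c])
  have Fprops: "finite (F p) \<and> F p \<noteq> {} \<and> F p \<subseteq> {..<N} \<and> i \<notin> F p \<and> card (F p) \<le> r \<and> (\<forall>row. col i row = sm (F p) row)"
    if pI: "p \<in> I" for p
  proof -
    obtain w j where p: "p = (w, j)" by (cases p)
    show ?thesis
    proof (cases "j = 0")
      case True
      then have w: "w < m" "w \<noteq> c" using pI p unfolding I_def by auto
      have Fp: "F p = {Bn (s+1) w}" unfolding F_def p using True by simp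
      have "Bn (s+1) w < N" using Bn_lt[of "s+1" w] w by simp
      moreover have "i \<noteq> Bn (s+1) w" unfolding i_def using w c by simp
      moreover have "\<forall>row. col i row = sm {Bn (s+1) w} row" unfolding sm_single coli col_zero[OF w(1)] by simp
      ultimately show ?thesis unfolding Fp using r by simp
    next
      case False
      then have w: "w < m" using pI p unfolding I_def by auto
      have Fp: "F p = {An 0 w, Bn 0 w}" unfolding F_def p using False by simp
      have ne: "An 0 w \<noteq> Bn 0 w" using w by simp
      have "An 0 w < N" "Bn 0 w < N" using An_lt[of 0 w] Bn_lt[of 0 w] w by simp_all
      moreover have "i \<noteq> An 0 w" "i \<noteq> Bn 0 w" unfolding i_def using w c by simp_all
      moreover have "\<forall>row. col i row = sm {An 0 w, Bn 0 w} row" unfolding sm_two[OF ne] coli colA0[OF w] by simp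
      moreover have "card {An 0 w, Bn 0 w} \<le> r" using card2[of "An 0 w" "Bn 0 w"] r by linarith
      ultimately show ?thesis unfolding Fp by simp
    qed
  qed
  have Fdisj: "F p \<inter> F q = {}" if pI: "p \<in> I" and qI: "q \<in> I" and pq: "p \<noteq> q" for p q
  proof -
    obtain w j where p: "p = (w, j)" by (cases p)
    obtain w' j' where q: "q = (w', j')" by (cases q)
    have w: "w < m" "w' < m" "j = 0 \<or> j = 1" "j' = 0 \<or> j' = 1" using pI qI p q unfolding I_def by auto
    have ne: "w \<noteq> w' \<or> j \<noteq> j'" using pq p q by auto
    show ?thesis unfolding F_def p q using w ne by auto
  qed
  have finE: "finite E" using E(1) finite_subset by blast
  have "\<exists>p\<in>I. F p \<inter> E = {}"
  proof (rule pigeon[OF finI finE E(2)[folded i_def]])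
    show "card E \<le> card I" using cE cardI by simp
    show "\<forall>p\<in>I. i \<notin> F p" using Fprops by blast
    show "\<forall>p\<in>I. \<forall>q\<in>I. p \<noteq> q \<longrightarrow> F p \<inter> F q = {}" using Fdisj by blast
  qed
  then obtain p where pI: "p \<in> I" and pE: "F p \<inter> E = {}" by blast
  note fp = Fprops[OF pI]
  have sub: "F p \<subseteq> {..<N} - E" using fp pE by auto
  have rel: "related k s G i (F p)"
    unfolding related_def using fp unfolding sm_def by auto
  show ?thesis unfolding allows_repair_def i_def[symmetric] using sub fp rel by blast
qed

lemma node_all:
  assumes E: "E \<subseteq> {..<N}" "i \<in> E"
  shows "(card E \<le> 2^(k-1) \<longrightarrow> allows_repair k s G E 2 i) \<and>
         (card E \<le> 2^k - 1 \<longrightarrow> allows_repair k s G E 3 i) \<and>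
         (card E \<le> 2^k \<longrightarrow> allows_repair k s G E 4 i) \<and>
         (card E \<le> 2^k + 2^(k-1) - 1 \<longrightarrow> allows_repair k s G E 5 i)"
proof -
  have "i < N" using E by auto
  then obtain b c where bc: "c < m" "b \<le> s+1" "i = An b c \<or> i = Bn b c" using node_cases by blast
  show ?thesis
  proof (cases "i = Bn b c")
    case iB: True
    show ?thesis
    proof (cases "b = s+1")
      case True
      have Ei: "Bn (s+1) c \<in> E" using E(2) iB True by simp
      have bnd: "(2::nat)^k + 2^(k-1) - 1 \<le> 2*m - 1" using powK m_pow by linarith
      have b1: "(2::nat)^(k-1) \<le> 2^k + 2^(k-1) - 1" "(2::nat)^k - 1 \<le> 2^k + 2^(k-1) - 1" "(2::nat)^k \<le> 2^k + 2^(k-1) - 1"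
        using powK by linarith+
      have Z: "card E \<le> 2*m - 1 \<Longrightarrow> 2 \<le> r \<Longrightarrow> allows_repair k s G E r i" for r
        using zero_node[OF bc(1) E(1) Ei] unfolding iB True by blast
      show ?thesis
      proof (intro conjI impI)
        assume "card E \<le> 2^(k-1)" then show "allows_repair k s G E 2 i" using b1 bnd by (intro Z) linarith+
      next
        assume "card E \<le> 2^k - 1" then show "allows_repair k s G E 3 i" using b1 bnd by (intro Z) linarith+
      next
        assume "card E \<le> 2^k" then show "allows_repair k s G E 4 i" using b1 bnd by (intro Z) linarith+
      next
        assume "card E \<le> 2^k + 2^(k-1) - 1" then show "allows_repair k s G E 5 i" using b1 bnd by (intro Z) linarith+
      qed
    next
      case False
      then have "b \<le> s" using bc by simp
      moreover have "Bn b c \<in> E" using E(2) iB by simp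
      ultimately show ?thesis using copysys_all[OF cs_B[OF _ bc(1)] E(1)] unfolding iB by blast
    qed
  next
    case False
    then have iA: "i = An b c" using bc by blast
    have EA: "An b c \<in> E" using E(2) iA by simp
    show ?thesis
    proof (cases "b = 0")
      case True
      then show ?thesis using copysys_all[OF cs_A0[OF bc(1)] E(1)] EA unfolding iA by blast
    next
      case b0: False
      show ?thesis
      proof (cases "b = s+1")
        case True
        then show ?thesis using copysys_all[OF cs_As[OF bc(1)] E(1)] EA unfolding iA by blast
      next
        case False
        then have "1 \<le> b" "b \<le> s" using b0 bc by auto
        then show ?thesis using copysys_all[OF cs_Ab[OF _ _ bc(1)] E(1)] EA unfolding iA by blast
      qed
    qed
  qed
qed

end

theorem theorem5p4:
  fixes k s :: nat and G :: "nat \<Rightarrow> nat \<Rightarrow> bool"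
  assumes "k \<ge> 2" and "simplex_gen k G"
  shows "\<forall>E. E \<subseteq> {..<num_nodes k s} \<longrightarrow>
           (card E \<le> 2^(k-1) \<longrightarrow> parallel_repair k s G E 2) \<and>
           (card E \<le> 2^k - 1 \<longrightarrow> parallel_repair k s G E 3) \<and>
           (card E \<le> 2^k \<longrightarrow> parallel_repair k s G E 4) \<and>
           (card E \<le> 2^k + 2^(k-1) - 1 \<longrightarrow> parallel_repair k s G E 5)"
proof -
  interpret um k s G using assms by unfold_locales
  show ?thesis unfolding parallel_repair_def using node_all by blast
qed

end
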